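(* Let $(N,+,* )$ be a nilpotent ring with adjoint operation $x\circ y=x+y+x*y$, let $S$ be a subring and $I$ a two-sided ideal of $N$ with $S\cap I=\{0\}$ and $N=S+I$. Then every $x\in N$ can be written uniquely as $x=s\circ i$ with $s\in S$, $i\in I$; define $x\bullet y=s\circ y\circ i$, so that $(N,+,\bullet)$ is a left brace, and let $r(x,y)=(\sigma_x(y),\tau_y(x))$ be its Yang–Baxter map. Let $X\subseteq N$ be such that $(X,r)$ is a solution of the set-theoretic Yang–Baxter equation, and let $J\subseteq I\cap X$ be a two-sided ideal of the ring $N$. Let $f,g:X\to X$ and $\wedge:X\times X\to X$ be maps and put $k(x)=f(x)\wedge g(x)$. Suppose that: $f$ is $\mathcal G(X,r)$-equivariant; $\sigma_x(y\wedge g(z))=\sigma_x(y)\wedge g(z)$ for all $x,y,z\in X$; $g(x+j)=g(x)$ whenever $x\in X$, $j\in J$, $x+j\in X$; and $k(x)-x\in J$ for all $x\in X$. Then $k$ is a reflection of $(X,r)$.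
   Context: A (left) brace is a triple $(B,+,\circ)$ with $(B,+)$ abelian group, $(B,\circ)$ group, and $x\circ(y+z)=x\circ y+x\circ z-x$. The Yang–Baxter map of the brace $(N,+,\bullet)$ is $r(x,y)=(\sigma_x(y),\tau_y(x))$ with $\sigma_x(y)=x\bullet y-x$ and $\tau_y(x)=(\sigma_x(y))^{-1}\bullet x-(\sigma_x(y))^{-1}$, inverses taken in $(N,\bullet)$. For $X\subseteq N$, $(X,r)$ is a solution of the set-theoretic Yang–Baxter equation if $r(X\times X)\subseteq X\times X$ and $(\mathrm{id}\times r)(r\times\mathrm{id})(\mathrm{id}\times r)=(r\times\mathrm{id})(\mathrm{id}\times r)(r\times\mathrm{id})$ on $X^3$. A map $k:X\to X$ is a reflection of $(X,r)$ if $r(\mathrm{id}\times k)r(\mathrm{id}\times k)=(\mathrm{id}\times k)r(\mathrm{id}\times k)r$ on $X\times X$; $k$ is $\mathcal G(X,r)$-equivariant if $k\sigma_x=\sigma_x k$ on $X$ for every $x\in X$. *)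

theory Defs
  imports Main
begin

text \<open>The ring N is the whole (possibly non-unital) ring type 'a :: ring.\<close>

fun nprod :: "'a::ring list \<Rightarrow> 'a" where
  "nprod [] = 0"
| "nprod [x] = x"
| "nprod (x # y # ys) = x * nprod (y # ys)"

definition nilpotent_ring :: "'a::ring itself \<Rightarrow> bool" where
  "nilpotent_ring _ \<longleftrightarrow> (\<exists>n>0. \<forall>xs::'a list. length xs = n \<longrightarrow> nprod xs = 0)"

definition adj :: "'a::ring \<Rightarrow> 'a \<Rightarrow> 'a" where
  "adj x y = x + y + x * y"

definition is_subring :: "'a::ring set \<Rightarrow> bool" where
  "is_subring S \<longleftrightarrow> 0 \<in> S \<and> (\<forall>x\<in>S. \<forall>y\<in>S. x + y \<in> S \<and> x * y \<in> S) \<and> (\<forall>x\<in>S. - x \<in> S)"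

definition is_ideal :: "'a::ring set \<Rightarrow> bool" where
  "is_ideal I \<longleftrightarrow> 0 \<in> I \<and> (\<forall>x\<in>I. \<forall>y\<in>I. x + y \<in> I) \<and> (\<forall>x\<in>I. - x \<in> I)
     \<and> (\<forall>x\<in>I. \<forall>a. a * x \<in> I \<and> x * a \<in> I)"

definition dec_s :: "'a::ring set \<Rightarrow> 'a set \<Rightarrow> 'a \<Rightarrow> 'a" where
  "dec_s S I x = (THE s. s \<in> S \<and> (\<exists>i\<in>I. x = adj s i))"

definition dec_i :: "'a::ring set \<Rightarrow> 'a set \<Rightarrow> 'a \<Rightarrow> 'a" where
  "dec_i S I x = (THE i. i \<in> I \<and> (\<exists>s\<in>S. x = adj s i))"

definition bul :: "'a::ring set \<Rightarrow> 'a set \<Rightarrow> 'a \<Rightarrow> 'a \<Rightarrow> 'a" where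
  "bul S I x y = adj (adj (dec_s S I x) y) (dec_i S I x)"

definition binv :: "'a::ring set \<Rightarrow> 'a set \<Rightarrow> 'a \<Rightarrow> 'a" where
  "binv S I x = (THE y. bul S I x y = 0 \<and> bul S I y x = 0)"

definition sig :: "'a::ring set \<Rightarrow> 'a set \<Rightarrow> 'a \<Rightarrow> 'a \<Rightarrow> 'a" where
  "sig S I x y = bul S I x y - x"

definition tau :: "'a::ring set \<Rightarrow> 'a set \<Rightarrow> 'a \<Rightarrow> 'a \<Rightarrow> 'a" where
  "tau S I y x = bul S I (binv S I (sig S I x y)) x - binv S I (sig S I x y)"

definition ybmap :: "'a::ring set \<Rightarrow> 'a set \<Rightarrow> 'a \<times> 'a \<Rightarrow> 'a \<times> 'a" where
  "ybmap S I p = (sig S I (fst p) (snd p), tau S I (snd p) (fst p))"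

definition is_YB_solution :: "'b set \<Rightarrow> ('b \<times> 'b \<Rightarrow> 'b \<times> 'b) \<Rightarrow> bool" where
  "is_YB_solution X r \<longleftrightarrow> r ` (X \<times> X) \<subseteq> X \<times> X \<and>
     (\<forall>x\<in>X. \<forall>y\<in>X. \<forall>z\<in>X.
        (let r12 = (\<lambda>(a,b,c). let (a',b') = r (a,b) in (a',b',c));
             r23 = (\<lambda>(a,b,c). let (b',c') = r (b,c) in (a,b',c'))
         in r23 (r12 (r23 (x,y,z))) = r12 (r23 (r12 (x,y,z)))))"

definition is_reflection :: "'b set \<Rightarrow> ('b \<times> 'b \<Rightarrow> 'b \<times> 'b) \<Rightarrow> ('b \<Rightarrow> 'b) \<Rightarrow> bool" where
  "is_reflection X r k \<longleftrightarrow> (\<forall>x\<in>X. \<forall>y\<in>X.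
     r (apsnd k (r (apsnd k (x, y)))) = apsnd k (r (apsnd k (r (x, y)))))"

end

theory Submission
  imports Defs
begin

lemma adj_assoc: "adj (adj a b) c = adj a (adj b (c::'a::ring))"
  unfolding adj_def by (simp add: algebra_simps)

lemma adj_0[simp]: "adj 0 x = x" "adj x 0 = (x::'a::ring)"
  by (simp_all add: adj_def)

fun tp :: "'a::ring \<Rightarrow> nat \<Rightarrow> 'a \<Rightarrow> 'a" where
  "tp t 0 z = z"
| "tp t (Suc m) z = t * tp t m z"

lemma nprod_cons: "xs \<noteq> [] \<Longrightarrow> nprod (x # xs) = x * nprod xs"
  by (cases xs) auto

lemma tp_nprod: "tp t m z = nprod (replicate m t @ [z])"
  by (induction m) (auto simp: nprod_cons)

lemma tp_zero:
  assumes "nilpotent_ring TYPE('a::ring)"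
  shows "\<exists>M. \<forall>(t::'a) z. tp t M z = 0"
proof -
  obtain n where n: "n > 0" and H: "\<forall>xs::'a list. length xs = n \<longrightarrow> nprod xs = 0"
    using assms unfolding nilpotent_ring_def by auto
  have "tp t (n - 1) z = 0" for t z :: 'a
    using H n by (simp add: tp_nprod)
  then show ?thesis by blast
qed

fun B :: "'a::ring \<Rightarrow> nat \<Rightarrow> 'a" where
  "B t 0 = 0"
| "B t (Suc m) = t + t * B t m"

lemma B_eq: "B t m - t * B t m = t - tp t m t"
proof (induction m)
  case 0
  then show ?case by simp
next
  case (Suc m)
  have "t * (B t m - t * B t m) = t * (t - tp t m t)" using Suc by simp
  then have "t * B t m - t * (t * B t m) = t * t - t * tp t m t"
    by (simp add: right_diff_distrib)
  then show ?case by (simp add: algebra_simps)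
qed

lemma adj_rinv_gen:
  assumes nil: "nilpotent_ring TYPE('a::ring)"
    and P0: "P 0" and Pc: "\<And>x y. P x \<Longrightarrow> P y \<Longrightarrow> P (x + y)" "\<And>x y. P x \<Longrightarrow> P y \<Longrightarrow> P (x * y)"
    and Pn: "\<And>x. P x \<Longrightarrow> P (- x)" and Pa: "P (a::'a)"
  shows "\<exists>b. P b \<and> adj a b = 0"
proof -
  obtain M where M: "\<forall>(t::'a) z. tp t M z = 0" using tp_zero[OF nil] by blast
  have PB: "P (B t m)" if "P t" for t m
    using that by (induction m) (auto intro: P0 Pc)
  define b where "b = B (- a) M"
  have "b - (- a) * b = - a" using B_eq[of "-a" M] M by (simp add: b_def)
  then have "adj a b = 0" by (simp add: adj_def algebra_simps)
  moreover have "P b" using PB Pn Pa b_def by blast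
  ultimately show ?thesis by blast
qed

lemma adj_rinv:
  assumes nil: "nilpotent_ring TYPE('a::ring)"
  shows "\<exists>b. adj (a::'a) b = 0"
  using adj_rinv_gen[OF nil, of "\<lambda>_. True"] by auto

lemma adj_linv:
  assumes nil: "nilpotent_ring TYPE('a::ring)" and ab: "adj (a::'a) b = 0"
  shows "adj b a = 0"
proof -
  obtain c where c: "adj b c = 0" using adj_rinv[OF nil] by blast
  have "a = adj a (adj b c)" using c by simp
  also have "\<dots> = c" using ab by (simp add: adj_assoc[symmetric])
  finally show ?thesis using c by simp
qed

lemma adj_cancel:
  assumes nil: "nilpotent_ring TYPE('a::ring)" and e: "adj (a::'a) x = adj a y"
  shows "x = y"
proof -
  obtain b where b: "adj a b = 0" using adj_rinv[OF nil] by blast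
  have ba: "adj b a = 0" using adj_linv[OF nil b] .
  have "x = adj (adj b a) x" using ba by simp
  also have "\<dots> = adj (adj b a) y" using e by (simp add: adj_assoc)
  also have "\<dots> = y" using ba by simp
  finally show ?thesis .
qed

definition Lm :: "'a::ring \<Rightarrow> 'a \<Rightarrow> 'a \<Rightarrow> 'a" where
  "Lm s i z = z + s * z + z * i + s * z * i"

definition Lf :: "'a::ring \<Rightarrow> 'a \<Rightarrow> 'a" where "Lf s z = z + s * z"
definition Rg :: "'a::ring \<Rightarrow> 'a \<Rightarrow> 'a" where "Rg i z = z + z * i"

lemma Lm_LR: "Lm s i z = Rg i (Lf s z)"
  by (simp add: Lm_def Lf_def Rg_def algebra_simps)

lemma Lf_Rg: "Lf s (Rg i z) = Rg i (Lf s z)"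
  by (simp add: Lf_def Rg_def algebra_simps)

lemma Lf_Lf: "adj s s' = 0 \<Longrightarrow> Lf s (Lf s' z) = z"
proof -
  assume h: "adj s s' = 0"
  have "Lf s (Lf s' z) = z + adj s s' * z" by (simp add: Lf_def adj_def algebra_simps)
  then show ?thesis using h by simp
qed

lemma Rg_Rg: "adj i' i = 0 \<Longrightarrow> Rg i (Rg i' z) = z"
proof -
  assume h: "adj i' i = 0"
  have "Rg i (Rg i' z) = z + z * adj i' i" by (simp add: Rg_def adj_def algebra_simps)
  then show ?thesis using h by simp
qed

lemma Lm_inv: "adj s s' = 0 \<Longrightarrow> adj i' i = 0 \<Longrightarrow> Lm s i (Lm s' i' z) = z"
  by (simp add: Lm_LR Lf_Rg Lf_Lf Rg_Rg)

lemma Lm_diff: "Lm s i (a - b) = Lm s i a - Lm s i b"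
  by (simp add: Lm_def algebra_simps)

lemma ideal_closed:
  assumes "is_ideal J"
  shows "0 \<in> J" "a \<in> J \<Longrightarrow> b \<in> J \<Longrightarrow> a + b \<in> J" "a \<in> J \<Longrightarrow> - a \<in> J"
    "a \<in> J \<Longrightarrow> b \<in> J \<Longrightarrow> a - b \<in> J" "a \<in> J \<Longrightarrow> x * a \<in> J" "a \<in> J \<Longrightarrow> a * x \<in> J"
  using assms unfolding is_ideal_def
  by (auto simp del: diff_conv_add_uminus simp add: diff_conv_add_uminus[symmetric]) (metis diff_conv_add_uminus)

lemma subring_closed:
  assumes "is_subring S"
  shows "0 \<in> S" "a \<in> S \<Longrightarrow> b \<in> S \<Longrightarrow> a + b \<in> S" "a \<in> S \<Longrightarrow> - a \<in> S"
    "a \<in> S \<Longrightarrow> b \<in> S \<Longrightarrow> a - b \<in> S" "a \<in> S \<Longrightarrow> b \<in> S \<Longrightarrow> a * b \<in> S"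
  using assms unfolding is_subring_def
  by (auto) (metis diff_conv_add_uminus)

lemma Lm_J: "is_ideal J \<Longrightarrow> j \<in> J \<Longrightarrow> Lm s i j \<in> J"
  unfolding Lm_def by (intro ideal_closed) (auto intro: ideal_closed)

lemma Lm_Jdiff:
  assumes J: "is_ideal J" and d: "i1 - i2 \<in> J"
  shows "Lm s i1 z - Lm s i2 z \<in> J"
proof -
  have "Lm s i1 z - Lm s i2 z = z * (i1 - i2) + s * (z * (i1 - i2))"
    by (simp add: Lm_def algebra_simps)
  then show ?thesis using d by (auto intro: ideal_closed[OF J])
qed

locale dec =
  fixes S I :: "'a::ring set"
  assumes nilA: "nilpotent_ring TYPE('a)"
    and SA: "is_subring S" and IA: "is_ideal I"
    and SI0A: "S \<inter> I = {0}" and NSIA: "\<forall>x. \<exists>s\<in>S. \<exists>i\<in>I. x = s + i"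
begin

lemma inv_S: "s \<in> S \<Longrightarrow> \<exists>s'\<in>S. adj s s' = 0 \<and> adj s' s = 0"
proof -
  assume s: "s \<in> S"
  obtain b where "b \<in> S" "adj s b = 0"
    using adj_rinv_gen[OF nilA, of "\<lambda>x. x \<in> S" s] subring_closed(1,2,3,5)[OF SA] s by metis
  then show ?thesis using adj_linv[OF nilA] by blast
qed

lemma inv_I: "i \<in> I \<Longrightarrow> \<exists>i'\<in>I. adj i i' = 0 \<and> adj i' i = 0"
proof -
  assume s: "i \<in> I"
  obtain b where "b \<in> I" "adj i b = 0"
    using adj_rinv_gen[OF nilA, of "\<lambda>x. x \<in> I" i] ideal_closed(1,2,3,5)[OF IA] s by metis
  then show ?thesis using adj_linv[OF nilA] by blast
qed

lemma dec_ex: "\<exists>s\<in>S. \<exists>i\<in>I. x = adj s i"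
proof -
  obtain s i0 where s: "s \<in> S" and i0: "i0 \<in> I" and x: "x = s + i0" using NSIA by blast
  obtain s' where s': "s' \<in> S" "adj s s' = 0" "adj s' s = 0" using inv_S[OF s] by blast
  have "adj s' x = adj s' s + i0 + s' * i0" unfolding x adj_def by (simp add: algebra_simps)
  then have "adj s' x = i0 + s' * i0" using s' by simp
  then have "adj s' x \<in> I" using i0 by (auto intro: ideal_closed[OF IA])
  moreover have "x = adj s (adj s' x)" using s' by (simp add: adj_assoc[symmetric])
  ultimately show ?thesis using s by blast
qed

lemma dec_uniq:
  assumes "s1 \<in> S" "s2 \<in> S" "i1 \<in> I" "i2 \<in> I" "adj s1 i1 = adj s2 i2"
  shows "s1 = s2 \<and> i1 = i2"
proof -
  have "s1 - s2 = (i2 + s2 * i2) - (i1 + s1 * i1)" using assms(5) unfolding adj_def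
    by (simp add: algebra_simps)
  moreover have "(i2 + s2 * i2) - (i1 + s1 * i1) \<in> I"
    using assms(3,4) ideal_closed(2,4,5)[OF IA] by meson
  ultimately have "s1 - s2 \<in> I" by simp
  moreover have "s1 - s2 \<in> S" using assms by (auto intro: subring_closed[OF SA])
  ultimately have "s1 - s2 \<in> S \<inter> I" by blast
  then have "s1 - s2 = 0" using SI0A by blast
  then have "s1 = s2" by simp
  then show ?thesis using assms(5) adj_cancel[OF nilA] by blast
qed

lemma ds_adj:
  assumes "s \<in> S" "i \<in> I"
  shows "dec_s S I (adj s i) = s" "dec_i S I (adj s i) = i"
proof -
  show "dec_s S I (adj s i) = s" unfolding dec_s_def
    by (rule the_equality) (use assms dec_uniq in blast)+
  show "dec_i S I (adj s i) = i" unfolding dec_i_def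
    by (rule the_equality) (use assms dec_uniq in blast)+
qed

lemma ds: "dec_s S I x \<in> S" "dec_i S I x \<in> I" "x = adj (dec_s S I x) (dec_i S I x)"
proof -
  obtain s i where "s \<in> S" "i \<in> I" "x = adj s i" using dec_ex by blast
  then show "dec_s S I x \<in> S" "dec_i S I x \<in> I" "x = adj (dec_s S I x) (dec_i S I x)"
    using ds_adj by auto
qed

lemma sig_L: "sig S I u z = Lm (dec_s S I u) (dec_i S I u) z"
proof -
  define s where "s = dec_s S I u"
  define i where "i = dec_i S I u"
  have u: "u = adj s i" using ds s_def i_def by blast
  have "sig S I u z = adj (adj s z) i - u" by (simp add: sig_def bul_def s_def i_def)
  also have "\<dots> = adj (adj s z) i - adj s i" using u by simp
  also have "\<dots> = Lm s i z" by (simp add: adj_def Lm_def algebra_simps)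
  finally show ?thesis by (simp add: s_def i_def)
qed

lemma binv_props:
  "\<exists>s' i'. adj (dec_s S I u) s' = 0 \<and> adj s' (dec_s S I u) = 0 \<and>
      adj (dec_i S I u) i' = 0 \<and> adj i' (dec_i S I u) = 0 \<and>
      dec_s S I (binv S I u) = s' \<and> dec_i S I (binv S I u) = i'"
proof -
  define s where "s = dec_s S I u"
  define i where "i = dec_i S I u"
  have u: "u = adj s i" and sS: "s \<in> S" and iI: "i \<in> I" using ds s_def i_def by blast+
  obtain s' where s': "s' \<in> S" "adj s s' = 0" "adj s' s = 0" using inv_S[OF sS] by blast
  obtain i' where i': "i' \<in> I" "adj i i' = 0" "adj i' i = 0" using inv_I[OF iI] by blast
  define y0 where "y0 = adj s' i'"
  have dy: "dec_s S I y0 = s'" "dec_i S I y0 = i'" using ds_adj s' i' y0_def by auto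
  have b1: "bul S I u y0 = 0"
    unfolding bul_def s_def[symmetric] i_def[symmetric] y0_def
    by (simp add: adj_assoc[symmetric] s' i')
  have b2: "bul S I y0 u = 0"
    unfolding bul_def dy unfolding u y0_def
    by (simp add: adj_assoc[symmetric] s' i')
  have un: "y = y0" if "bul S I u y = 0 \<and> bul S I y u = 0" for y
  proof -
    have "adj s (adj y i) = adj s s'" using that s'
      unfolding bul_def s_def[symmetric] i_def[symmetric] by (simp add: adj_assoc)
    then have "adj y i = s'" using adj_cancel[OF nilA] by blast
    then have "adj (adj y i) i' = y0" by (simp add: y0_def)
    then show ?thesis using i' by (simp add: adj_assoc)
  qed
  have "binv S I u = y0" unfolding binv_def
    by (rule the_equality) (use b1 b2 un in blast)+
  then show ?thesis using dy s' i' s_def i_def by blast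
qed

lemma sig_inv: "sig S I u (sig S I (binv S I u) z) = z" "sig S I (binv S I u) (sig S I u z) = z"
  using binv_props[of u] by (auto simp: sig_L Lm_inv)

lemma sig_inj: "sig S I u a = sig S I u b \<Longrightarrow> a = b"
  by (metis sig_inv(2))

lemma sig_diff: "sig S I u (a - b) = sig S I u a - sig S I u b"
  by (simp add: sig_L Lm_diff)

context
  fixes J assumes J: "is_ideal J" and JI: "J \<subseteq> I"
begin

lemma sig_J: "j \<in> J \<Longrightarrow> sig S I u j \<in> J"
  by (simp add: sig_L Lm_J[OF J])

lemma sig_Jinv: "sig S I u d \<in> J \<Longrightarrow> d \<in> J"
  by (metis sig_J sig_inv(2))

lemma sig_JM:
  assumes d: "u1 - u2 \<in> J"
  shows "sig S I u1 z - sig S I u2 z \<in> J"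
proof -
  define s1 where "s1 = dec_s S I u1"
  define i1 where "i1 = dec_i S I u1"
  define s2 where "s2 = dec_s S I u2"
  define i2 where "i2 = dec_i S I u2"
  have u1: "u1 = adj s1 i1" "s1 \<in> S" "i1 \<in> I" using ds s1_def i1_def by blast+
  have u2: "u2 = adj s2 i2" "s2 \<in> S" "i2 \<in> I" using ds s2_def i2_def by blast+
  have "s1 - s2 = (u1 - u2) - ((i1 + s1 * i1) - (i2 + s2 * i2))"
    using u1 u2 by (simp add: adj_def algebra_simps)
  moreover have "u1 - u2 \<in> I" using d JI by blast
  moreover have "(u1 - u2) - ((i1 + s1 * i1) - (i2 + s2 * i2)) \<in> I"
    using u1(3) u2(3) \<open>u1 - u2 \<in> I\<close> ideal_closed(2,4,5)[OF IA] by meson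
  ultimately have "s1 - s2 \<in> I" by simp
  moreover have "s1 - s2 \<in> S" using u1 u2 by (auto intro: subring_closed[OF SA])
  ultimately have "s1 - s2 \<in> S \<inter> I" by blast
  then have "s1 - s2 = 0" using SI0A by blast
  then have ss: "s1 = s2" by simp
  have "u1 - u2 = Lm s1 0 (i1 - i2)"
    using u1 u2 ss by (simp add: adj_def Lm_def algebra_simps)
  obtain s' where s': "adj s' s1 = 0" using inv_S[OF u1(2)] by blast
  have "i1 - i2 = Lm s' 0 (Lm s1 0 (i1 - i2))" using Lm_inv[OF s', of 0 0] by simp
  then have "i1 - i2 \<in> J" using d \<open>u1 - u2 = _\<close> Lm_J[OF J] by metis
  then show ?thesis unfolding sig_L s1_def[symmetric] i1_def[symmetric] s2_def[symmetric]
      i2_def[symmetric] ss using Lm_Jdiff[OF J] by blast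
qed

end

end

theorem mainTheorem9:
  fixes S I J X :: "'a::ring set"
    and f g :: "'a \<Rightarrow> 'a" and w :: "'a \<Rightarrow> 'a \<Rightarrow> 'a" and k :: "'a \<Rightarrow> 'a"
  assumes nil: "nilpotent_ring TYPE('a)"
    and S: "is_subring S" and I: "is_ideal I"
    and SI0: "S \<inter> I = {0}" and NSI: "\<forall>x. \<exists>s\<in>S. \<exists>i\<in>I. x = s + i"
    and sol: "is_YB_solution X (ybmap S I)"
    and J: "is_ideal J" and JIX: "J \<subseteq> I \<inter> X"
    and fX: "\<forall>x\<in>X. f x \<in> X" and gX: "\<forall>x\<in>X. g x \<in> X"
    and wX: "\<forall>x\<in>X. \<forall>y\<in>X. w x y \<in> X"
    and k_def: "\<forall>x. k x = w (f x) (g x)"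
    and f_eq: "\<forall>x\<in>X. \<forall>y\<in>X. f (sig S I x y) = sig S I x (f y)"
    and sw: "\<forall>x\<in>X. \<forall>y\<in>X. \<forall>z\<in>X. sig S I x (w y (g z)) = w (sig S I x y) (g z)"
    and gJ: "\<forall>x\<in>X. \<forall>j\<in>J. x + j \<in> X \<longrightarrow> g (x + j) = g x"
    and kJ: "\<forall>x\<in>X. k x - x \<in> J"
  shows "is_reflection X (ybmap S I) k"
proof -
  interpret dec S I using nil S I SI0 NSI by unfold_locales
  have JI: "J \<subseteq> I" using JIX by blast
  note sJ = sig_J[OF J JI] and sJinv = sig_Jinv[OF J JI] and sJM = sig_JM[OF J JI]
  have XX: "sig S I a b \<in> X \<and> tau S I b a \<in> X" if "a \<in> X" "b \<in> X" for a b
  proof -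
    have "ybmap S I (a, b) \<in> X \<times> X" using sol that unfolding is_YB_solution_def by blast
    then show ?thesis by (simp add: ybmap_def)
  qed
  have kX: "k x \<in> X" if "x \<in> X" for x using that k_def fX gX wX by simp
  have tau_eq: "tau S I b a = sig S I (binv S I (sig S I a b)) a" for a b
    by (simp add: tau_def sig_def)
  have gJ': "g p = g q" if "p \<in> X" "q \<in> X" "p - q \<in> J" for p q
  proof -
    have "q + (p - q) = p" by simp
    then show ?thesis using gJ that by metis
  qed
  have sk: "sig S I a (k b) = w (f (sig S I a b)) (g b)" if "a \<in> X" "b \<in> X" for a b
    using that k_def sw f_eq fX by simp
  have Jneg: "q - p \<in> J" if "p - q \<in> J" for p q
  proof -
    have "q - p = - (p - q)" by simp
    then show ?thesis using that ideal_closed(3)[OF J] by metis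
  qed
  show ?thesis unfolding is_reflection_def
  proof (intro ballI)
    fix x y assume x: "x \<in> X" and y: "y \<in> X"
    define a where "a = sig S I x (k y)"
    define b where "b = tau S I (k y) x"
    define a' where "a' = sig S I x y"
    define b' where "b' = tau S I y x"
    have ky: "k y \<in> X" using kX y .
    have aX: "a \<in> X" "b \<in> X" using XX[OF x ky] a_def b_def by auto
    have aX': "a' \<in> X" "b' \<in> X" using XX[OF x y] a'_def b'_def by auto
    have kb: "k b \<in> X" "k b' \<in> X" using kX aX aX' by auto
    have lhs: "ybmap S I (apsnd k (ybmap S I (apsnd k (x, y))))
        = (sig S I a (k b), tau S I (k b) a)" by (simp add: ybmap_def a_def b_def)
    have rhs: "apsnd k (ybmap S I (apsnd k (ybmap S I (x, y))))
        = (sig S I a' (k b'), k (tau S I (k b') a'))" by (simp add: ybmap_def a'_def b'_def)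
    have sab: "sig S I a b = x" unfolding b_def tau_eq a_def[symmetric] by (rule sig_inv(1))
    have sab': "sig S I a' b' = x" unfolding b'_def tau_eq a'_def[symmetric] by (rule sig_inv(1))
    have "k y - y \<in> J" using kJ y by blast
    then have "a - a' \<in> J" unfolding a_def a'_def sig_diff[symmetric] by (rule sJ)
    then have "a' - a \<in> J" by (rule Jneg)
    then have "sig S I a' b' - sig S I a b' \<in> J" by (rule sJM)
    then have "sig S I a (b - b') \<in> J" using sab sab' by (simp add: sig_diff)
    then have "b - b' \<in> J" by (rule sJinv)
    then have gb: "g b = g b'" using gJ' aX aX' by blast
    define c where "c = sig S I a' (k b')"
    have c1: "sig S I a (k b) = c" unfolding c_def
      using sk[OF aX] sk[OF aX'] sab sab' gb by simp
    have cX: "c \<in> X" using XX[OF aX'(1) kb(2)] c_def by simp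
    define q where "q = tau S I (k b') a'"
    have qX: "q \<in> X" using XX[OF aX'(1) kb(2)] q_def by simp
    have scq: "sig S I c q = a'" unfolding q_def tau_eq c_def[symmetric] by (rule sig_inv(1))
    have p_eq: "tau S I (k b) a = sig S I (binv S I c) a" unfolding tau_eq c1 ..
    have "k b' - b' \<in> J" using kJ aX' by blast
    then have "c - x \<in> J" unfolding c_def sab'[symmetric] sig_diff[symmetric] by (rule sJ)
    then have "x - c \<in> J" by (rule Jneg)
    then have "sig S I x y - sig S I c y \<in> J" by (rule sJM)
    then have "sig S I c (q - y) \<in> J" using scq a'_def by (simp add: sig_diff)
    then have "q - y \<in> J" by (rule sJinv)
    then have gq: "g q = g y" using gJ' qX y by blast
    have "sig S I c (tau S I (k b) a) = a" unfolding p_eq by (rule sig_inv(1))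
    also have "a = w (f a') (g y)" unfolding a_def a'_def using sk[OF x y] .
    also have "\<dots> = sig S I c (k q)" using sk[OF cX qX] scq gq by simp
    finally have "tau S I (k b) a = k q" by (rule sig_inj)
    then show "ybmap S I (apsnd k (ybmap S I (apsnd k (x, y))))
        = apsnd k (ybmap S I (apsnd k (ybmap S I (x, y))))"
      unfolding lhs rhs c1 c_def q_def by simp
  qed
qed

end
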